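(* Let $A$ be any one of the following complex Leibniz algebras: (i) for $n\ge 2$, $R$ with basis $\{h,e_1,\dots,e_n\}$ and nonzero products $[e_i,e_1]=e_{i+1}$ ($1\le i\le n-1$), $[h,e_1]=-e_1$, $[e_i,h]=ie_i$ ($1\le i\le n$); (ii) for $n\ge 4$, $R(F_n^1)$, $\mathcal L_1$ or $\mathcal L_2$ with basis $\{h_1,h_2,e_1,\dots,e_n\}$, where $R(F_n^1)$ has nonzero products $[e_i,e_1]=e_{i+1}$ ($2\le i\le n-1$), $[e_1,h_2]=e_1$, $[h_2,e_1]=-e_1$, $[e_i,h_1]=e_i$, $[e_i,h_2]=(i-1)e_i$ ($2\le i\le n$); $\mathcal L_1$ has nonzero products $[e_1,e_1]=e_3$, $[e_i,e_1]=e_{i+1}$ ($3\le i\le n-1$), $[e_1,h_2]=e_1$, $[h_2,e_1]=-e_1$, $[e_2,h_1]=e_2$, $[h_1,e_2]=-e_2$, $[e_i,h_2]=(i-1)e_i$ ($3\le i\le n$); and $\mathcal L_2$ is as $\mathcal L_1$ but with $[h_1,e_2]=0$. Then the Leibniz algebra $\mathrm{Bider}(A)$ is isomorphic to $A$.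
   Context: Leibniz algebras are right Leibniz over $\mathbb C$: $[x,[y,z]]=[[x,y],z]-[[x,z],y]$. Unlisted products are zero. A derivation is a linear $d$ with $d([x,y])=[d(x),y]+[x,d(y)]$; an anti-derivation is a linear $D$ with $D([x,y])=[D(x),y]-[D(y),x]$; a biderivation is a pair $(d,D)$ of a derivation and an anti-derivation with $[x,d(y)]=[x,D(y)]$ for all $x,y$. $\mathrm{Bider}(A)$ is the set of all biderivations with the Leibniz bracket $[(d,D),(d',D')]=(d\circ d'-d'\circ d,\ D\circ d'-d'\circ D)$. *)

theory Defs
  imports Complex_Main "HOL-Library.Function_Algebras"
begin

text \<open>Finite-dimensional complex algebras with basis indexed by 0..N-1.
  Vectors are functions nat => complex vanishing at indices >= N;
  linear maps are N x N matrices (nat => nat => complex) vanishing outside.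
  The bracket is given by bb i j = the vector [b_i, b_j].\<close>

definition vecs :: "nat \<Rightarrow> (nat \<Rightarrow> complex) set" where
  "vecs N = {x. \<forall>k\<ge>N. x k = 0}"

definition mats :: "nat \<Rightarrow> (nat \<Rightarrow> nat \<Rightarrow> complex) set" where
  "mats N = {M. \<forall>i j. (N \<le> i \<or> N \<le> j) \<longrightarrow> M i j = 0}"

definition bv :: "nat \<Rightarrow> nat \<Rightarrow> complex" where
  "bv i = (\<lambda>k. if k = i then 1 else 0)"

definition sv :: "complex \<Rightarrow> (nat \<Rightarrow> complex) \<Rightarrow> nat \<Rightarrow> complex" where
  "sv a v = (\<lambda>k. a * v k)"

definition brk :: "nat \<Rightarrow> (nat \<Rightarrow> nat \<Rightarrow> nat \<Rightarrow> complex) \<Rightarrow>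
    (nat \<Rightarrow> complex) \<Rightarrow> (nat \<Rightarrow> complex) \<Rightarrow> nat \<Rightarrow> complex" where
  "brk N bb x y = (\<lambda>k. if k < N then (\<Sum>i<N. \<Sum>j<N. x i * y j * bb i j k) else 0)"

definition mv :: "nat \<Rightarrow> (nat \<Rightarrow> nat \<Rightarrow> complex) \<Rightarrow> (nat \<Rightarrow> complex) \<Rightarrow> nat \<Rightarrow> complex" where
  "mv N M x = (\<lambda>i. \<Sum>j<N. M i j * x j)"

definition mm :: "nat \<Rightarrow> (nat \<Rightarrow> nat \<Rightarrow> complex) \<Rightarrow> (nat \<Rightarrow> nat \<Rightarrow> complex) \<Rightarrow> nat \<Rightarrow> nat \<Rightarrow> complex" where
  "mm N A B = (\<lambda>i k. \<Sum>j<N. A i j * B j k)"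

definition is_derivation where
  "is_derivation N bb d \<longleftrightarrow> d \<in> mats N \<and>
     (\<forall>x\<in>vecs N. \<forall>y\<in>vecs N. mv N d (brk N bb x y) = brk N bb (mv N d x) y + brk N bb x (mv N d y))"

definition is_antiderivation where
  "is_antiderivation N bb D \<longleftrightarrow> D \<in> mats N \<and>
     (\<forall>x\<in>vecs N. \<forall>y\<in>vecs N. mv N D (brk N bb x y) = brk N bb (mv N D x) y - brk N bb (mv N D y) x)"

definition Bider where
  "Bider N bb = {(d, D). is_derivation N bb d \<and> is_antiderivation N bb D \<and>
      (\<forall>x\<in>vecs N. \<forall>y\<in>vecs N. brk N bb x (mv N d y) = brk N bb x (mv N D y))}"

definition bider_bracket where
  "bider_bracket N X Y = (mm N (fst X) (fst Y) - mm N (fst Y) (fst X),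
                          mm N (snd X) (fst Y) - mm N (fst Y) (snd X))"

definition pair_lin :: "complex \<Rightarrow> _ \<Rightarrow> _ \<Rightarrow> (nat \<Rightarrow> nat \<Rightarrow> complex) \<times> (nat \<Rightarrow> nat \<Rightarrow> complex)" where
  "pair_lin a X Y = ((\<lambda>i j. a * fst X i j + fst Y i j), (\<lambda>i j. a * snd X i j + snd Y i j))"

definition bider_iso_to_A :: "nat \<Rightarrow> (nat \<Rightarrow> nat \<Rightarrow> nat \<Rightarrow> complex) \<Rightarrow> bool" where
  "bider_iso_to_A N bb \<longleftrightarrow> (\<exists>\<phi>. bij_betw \<phi> (Bider N bb) (vecs N) \<and>
     (\<forall>X\<in>Bider N bb. \<forall>Y\<in>Bider N bb. \<forall>a. \<phi> (pair_lin a X Y) = sv a (\<phi> X) + \<phi> Y) \<and>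
     (\<forall>X\<in>Bider N bb. \<forall>Y\<in>Bider N bb. \<phi> (bider_bracket N X Y) = brk N bb (\<phi> X) (\<phi> Y)))"

text \<open>Algebra R (n >= 2): basis h = b_0, e_i = b_i (1 <= i <= n), N = n+1.\<close>
definition R_bb :: "nat \<Rightarrow> nat \<Rightarrow> nat \<Rightarrow> nat \<Rightarrow> complex" where
  "R_bb n i j =
     (if 1 \<le> i \<and> i \<le> n - 1 \<and> j = 1 then bv (i+1) else 0)
   + (if i = 0 \<and> j = 1 then sv (-1) (bv 1) else 0)
   + (if 1 \<le> i \<and> i \<le> n \<and> j = 0 then sv (of_nat i) (bv i) else 0)"

text \<open>Algebras with basis h_1 = b_0, h_2 = b_1, e_i = b_(i+1) (1 <= i <= n), N = n+2.
  In the definitions below, for an index p >= 2, the basis vector b_p is e_(p-1).\<close>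
definition RF_bb :: "nat \<Rightarrow> nat \<Rightarrow> nat \<Rightarrow> nat \<Rightarrow> complex" where
  "RF_bb n p q =
     (if 2 \<le> p - 1 \<and> p - 1 \<le> n - 1 \<and> 2 \<le> p \<and> q = 2 then bv (p+1) else 0)   \<comment> \<open>[e_i,e_1] = e_(i+1), 2<=i<=n-1\<close>
   + (if p = 2 \<and> q = 1 then bv 2 else 0)                                      \<comment> \<open>[e_1,h_2] = e_1\<close>
   + (if p = 1 \<and> q = 2 then sv (-1) (bv 2) else 0)                            \<comment> \<open>[h_2,e_1] = -e_1\<close>
   + (if 2 \<le> p - 1 \<and> p - 1 \<le> n \<and> 2 \<le> p \<and> q = 0 then bv p else 0)         \<comment> \<open>[e_i,h_1] = e_i, 2<=i<=n\<close>
   + (if 2 \<le> p - 1 \<and> p - 1 \<le> n \<and> 2 \<le> p \<and> q = 1 then sv (of_nat (p - 2)) (bv p) else 0)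
                                                                                \<comment> \<open>[e_i,h_2] = (i-1) e_i, 2<=i<=n\<close>"

definition L2_bb :: "nat \<Rightarrow> nat \<Rightarrow> nat \<Rightarrow> nat \<Rightarrow> complex" where
  "L2_bb n p q =
     (if p = 2 \<and> q = 2 then bv 4 else 0)                                      \<comment> \<open>[e_1,e_1] = e_3\<close>
   + (if 3 \<le> p - 1 \<and> p - 1 \<le> n - 1 \<and> 2 \<le> p \<and> q = 2 then bv (p+1) else 0)   \<comment> \<open>[e_i,e_1] = e_(i+1), 3<=i<=n-1\<close>
   + (if p = 2 \<and> q = 1 then bv 2 else 0)                                      \<comment> \<open>[e_1,h_2] = e_1\<close>
   + (if p = 1 \<and> q = 2 then sv (-1) (bv 2) else 0)                            \<comment> \<open>[h_2,e_1] = -e_1\<close>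
   + (if p = 3 \<and> q = 0 then bv 3 else 0)                                      \<comment> \<open>[e_2,h_1] = e_2\<close>
   + (if 3 \<le> p - 1 \<and> p - 1 \<le> n \<and> 2 \<le> p \<and> q = 1 then sv (of_nat (p - 2)) (bv p) else 0)
                                                                                \<comment> \<open>[e_i,h_2] = (i-1) e_i, 3<=i<=n\<close>"

definition L1_bb :: "nat \<Rightarrow> nat \<Rightarrow> nat \<Rightarrow> nat \<Rightarrow> complex" where
  "L1_bb n p q = L2_bb n p q
   + (if p = 0 \<and> q = 3 then sv (-1) (bv 3) else 0)"                           \<comment> \<open>[h_1,e_2] = -e_2\<close>

end

theory Submission
  imports Defs
begin

lemma brk_apply: "brk N bb x y k = (if k < N then (\<Sum>i<N. \<Sum>j<N. x i * y j * bb i j k) else 0)"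
  by (simp add: brk_def)

lemma nf1: "k < N \<Longrightarrow> brk N bb x (brk N bb y z) k =
  (\<Sum>a<N. \<Sum>b<N. \<Sum>c<N. x a * y b * z c * (\<Sum>m<N. bb b c m * bb a m k))"
proof -
  assume k: "k < N"
  have "brk N bb x (brk N bb y z) k = (\<Sum>a<N. \<Sum>m<N. x a * (\<Sum>b<N. \<Sum>c<N. y b * z c * bb b c m) * bb a m k)"
    using k by (simp add: brk_def)
  also have "\<dots> = (\<Sum>a<N. \<Sum>m<N. \<Sum>b<N. \<Sum>c<N. x a * y b * z c * (bb b c m * bb a m k))"
    by (simp add: sum_distrib_left sum_distrib_right mult_ac)
  also have "\<dots> = (\<Sum>a<N. \<Sum>b<N. \<Sum>m<N. \<Sum>c<N. x a * y b * z c * (bb b c m * bb a m k))"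
    by (rule sum.cong[OF refl], rule sum.swap)
  also have "\<dots> = (\<Sum>a<N. \<Sum>b<N. \<Sum>c<N. \<Sum>m<N. x a * y b * z c * (bb b c m * bb a m k))"
    by (rule sum.cong[OF refl], rule sum.cong[OF refl], rule sum.swap)
  also have "\<dots> = (\<Sum>a<N. \<Sum>b<N. \<Sum>c<N. x a * y b * z c * (\<Sum>m<N. bb b c m * bb a m k))"
    by (simp add: sum_distrib_left)
  finally show ?thesis .
qed

lemma nf2: "k < N \<Longrightarrow> brk N bb (brk N bb x y) z k =
  (\<Sum>a<N. \<Sum>b<N. \<Sum>c<N. x a * y b * z c * (\<Sum>m<N. bb a b m * bb m c k))"
proof -
  assume k: "k < N"
  have "brk N bb (brk N bb x y) z k = (\<Sum>m<N. \<Sum>c<N. (\<Sum>a<N. \<Sum>b<N. x a * y b * bb a b m) * z c * bb m c k)"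
    using k by (simp add: brk_def)
  also have "\<dots> = (\<Sum>m<N. \<Sum>c<N. \<Sum>a<N. \<Sum>b<N. x a * y b * z c * (bb a b m * bb m c k))"
    by (simp add: sum_distrib_left sum_distrib_right mult_ac)
  also have "\<dots> = (\<Sum>c<N. \<Sum>m<N. \<Sum>a<N. \<Sum>b<N. x a * y b * z c * (bb a b m * bb m c k))"
    by (rule sum.swap)
  also have "\<dots> = (\<Sum>c<N. \<Sum>a<N. \<Sum>m<N. \<Sum>b<N. x a * y b * z c * (bb a b m * bb m c k))"
    by (rule sum.cong[OF refl], rule sum.swap)
  also have "\<dots> = (\<Sum>c<N. \<Sum>a<N. \<Sum>b<N. \<Sum>m<N. x a * y b * z c * (bb a b m * bb m c k))"
    by (rule sum.cong[OF refl], rule sum.cong[OF refl], rule sum.swap)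
  also have "\<dots> = (\<Sum>a<N. \<Sum>c<N. \<Sum>b<N. \<Sum>m<N. x a * y b * z c * (bb a b m * bb m c k))"
    by (rule sum.swap)
  also have "\<dots> = (\<Sum>a<N. \<Sum>b<N. \<Sum>c<N. \<Sum>m<N. x a * y b * z c * (bb a b m * bb m c k))"
    by (rule sum.cong[OF refl], rule sum.swap)
  also have "\<dots> = (\<Sum>a<N. \<Sum>b<N. \<Sum>c<N. x a * y b * z c * (\<Sum>m<N. bb a b m * bb m c k))"
    by (simp add: sum_distrib_left)
  finally show ?thesis .
qed

lemma nf3: "k < N \<Longrightarrow> brk N bb (brk N bb x z) y k =
  (\<Sum>a<N. \<Sum>b<N. \<Sum>c<N. x a * y b * z c * (\<Sum>m<N. bb a c m * bb m b k))"
proof -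
  assume k: "k < N"
  have "brk N bb (brk N bb x z) y k = (\<Sum>a<N. \<Sum>c<N. \<Sum>b<N. x a * z c * y b * (\<Sum>m<N. bb a c m * bb m b k))"
    using nf2[OF k, where x=x and y=z and z=y] by simp
  also have "\<dots> = (\<Sum>a<N. \<Sum>b<N. \<Sum>c<N. x a * y b * z c * (\<Sum>m<N. bb a c m * bb m b k))"
  proof (rule sum.cong[OF refl])
    fix a show "(\<Sum>c<N. \<Sum>b<N. x a * z c * y b * (\<Sum>m<N. bb a c m * bb m b k)) =
       (\<Sum>b<N. \<Sum>c<N. x a * y b * z c * (\<Sum>m<N. bb a c m * bb m b k))"
      using sum.swap[of "\<lambda>c b. x a * z c * y b * (\<Sum>m<N. bb a c m * bb m b k)" "{..<N}" "{..<N}"]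
      by (simp add: mult_ac)
  qed
  finally show ?thesis .
qed

definition leib :: "nat \<Rightarrow> (nat \<Rightarrow> nat \<Rightarrow> nat \<Rightarrow> complex) \<Rightarrow> bool" where
  "leib N bb \<longleftrightarrow> (\<forall>a<N. \<forall>b<N. \<forall>c<N. \<forall>k<N. (\<Sum>m<N. bb b c m * bb a m k) =
      (\<Sum>m<N. bb a b m * bb m c k) - (\<Sum>m<N. bb a c m * bb m b k))"

lemma brk_leib: assumes "leib N bb"
  shows "brk N bb x (brk N bb y z) = brk N bb (brk N bb x y) z - brk N bb (brk N bb x z) y"
proof
  fix k show "brk N bb x (brk N bb y z) k = (brk N bb (brk N bb x y) z - brk N bb (brk N bb x z) y) k"
  proof (cases "k < N")
    case True
    have "brk N bb x (brk N bb y z) k = (\<Sum>a<N. \<Sum>b<N. \<Sum>c<N. x a * y b * z c * ((\<Sum>m<N. bb a b m * bb m c k) - (\<Sum>m<N. bb a c m * bb m b k)))"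
      unfolding nf1[OF True] using assms True unfolding leib_def
      by (intro sum.cong refl) auto
    also have "\<dots> = brk N bb (brk N bb x y) z k - brk N bb (brk N bb x z) y k"
      unfolding nf2[OF True, where x=x and y=y and z=z] nf3[OF True, where x=x and y=y and z=z]
      by (simp add: right_diff_distrib sum_subtractf)
    finally show ?thesis by simp
  next
    case False then show ?thesis by (simp add: brk_def)
  qed
qed


lemma brk_add1: "brk N bb (u + v) y = brk N bb u y + brk N bb v y"
  by (rule ext) (simp add: brk_def distrib_left distrib_right sum.distrib)
lemma brk_add2: "brk N bb x (u + v) = brk N bb x u + brk N bb x v"
  by (rule ext) (simp add: brk_def distrib_left distrib_right sum.distrib)
lemma brk_neg1: "brk N bb (- u) y = - brk N bb u y"
  by (rule ext) (simp add: brk_def sum_negf)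
lemma brk_neg2: "brk N bb x (- v) = - brk N bb x v"
  by (rule ext) (simp add: brk_def sum_negf)
lemma brk_sv1: "brk N bb (sv a u) y = sv a (brk N bb u y)"
  by (rule ext) (simp add: brk_def sv_def sum_distrib_left mult_ac)
lemma brk_sv2: "brk N bb x (sv a v) = sv a (brk N bb x v)"
  by (rule ext) (simp add: brk_def sv_def sum_distrib_left mult_ac)

lemma brk_sym0: assumes "leib N bb"
  shows "brk N bb y (brk N bb x z) = - brk N bb y (brk N bb z x)"
proof -
  have "brk N bb y (brk N bb x z) + brk N bb y (brk N bb z x) = 0"
    using brk_leib[OF assms, of y x z] brk_leib[OF assms, of y z x] by simp
  then show ?thesis by (simp add: eq_neg_iff_add_eq_0)
qed

definition dR :: "nat \<Rightarrow> (nat \<Rightarrow> nat \<Rightarrow> nat \<Rightarrow> complex) \<Rightarrow> (nat \<Rightarrow> complex) \<Rightarrow> nat \<Rightarrow> nat \<Rightarrow> complex" where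
  "dR N bb x = (\<lambda>k a. if k < N \<and> a < N then - (\<Sum>j<N. x j * bb a j k) else 0)"
definition dL :: "nat \<Rightarrow> (nat \<Rightarrow> nat \<Rightarrow> nat \<Rightarrow> complex) \<Rightarrow> (nat \<Rightarrow> complex) \<Rightarrow> nat \<Rightarrow> nat \<Rightarrow> complex" where
  "dL N bb x = (\<lambda>k a. if k < N \<and> a < N then (\<Sum>i<N. x i * bb i a k) else 0)"
definition phi :: "nat \<Rightarrow> (nat \<Rightarrow> nat \<Rightarrow> nat \<Rightarrow> complex) \<Rightarrow> (nat \<Rightarrow> complex) \<Rightarrow> _" where
  "phi N bb x = (dR N bb x, dL N bb x)"

lemma mv_dR: "mv N (dR N bb x) y = - brk N bb y x"
proof (rule ext)
  fix k show "mv N (dR N bb x) y k = (- brk N bb y x) k"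
  proof (cases "k < N")
    case True
    have e: "(\<Sum>j<N. x j * bb a j k) * y a = (\<Sum>j<N. y a * x j * bb a j k)" for a
      unfolding sum_distrib_right by (simp add: mult_ac)
    have "mv N (dR N bb x) y k = (\<Sum>a<N. - ((\<Sum>j<N. x j * bb a j k) * y a))"
      using True by (simp add: mv_def dR_def)
    also have "\<dots> = - (\<Sum>a<N. \<Sum>j<N. y a * x j * bb a j k)" by (simp only: e sum_negf)
    finally show ?thesis using True by (simp add: brk_def)
  qed (simp add: mv_def dR_def brk_def)
qed

lemma mv_dL: "mv N (dL N bb x) y = brk N bb x y"
proof (rule ext)
  fix k show "mv N (dL N bb x) y k = brk N bb x y k"
  proof (cases "k < N")
    case True
    have e: "(\<Sum>i<N. x i * bb i a k) * y a = (\<Sum>i<N. x i * y a * bb i a k)" for a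
      unfolding sum_distrib_right by (simp add: mult_ac)
    have "mv N (dL N bb x) y k = (\<Sum>a<N. (\<Sum>i<N. x i * bb i a k) * y a)"
      using True by (simp add: mv_def dL_def)
    also have "\<dots> = (\<Sum>a<N. \<Sum>i<N. x i * y a * bb i a k)" by (simp only: e)
    also have "\<dots> = (\<Sum>i<N. \<Sum>a<N. x i * y a * bb i a k)" by (rule sum.swap)
    finally show ?thesis using True by (simp add: brk_def)
  qed (simp add: mv_def dL_def brk_def)
qed

lemma dR_mats: "dR N bb x \<in> mats N" by (simp add: mats_def dR_def)
lemma dL_mats: "dL N bb x \<in> mats N" by (simp add: mats_def dL_def)

lemma phi_Bider: assumes L: "leib N bb" shows "phi N bb x \<in> Bider N bb"
proof -
  have der: "is_derivation N bb (dR N bb x)"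
    unfolding is_derivation_def mv_dR
  proof (intro conjI dR_mats ballI)
    fix y z
    show "- brk N bb (brk N bb y z) x = brk N bb (- brk N bb y x) z + brk N bb y (- brk N bb z x)"
      unfolding brk_neg1 brk_neg2 brk_leib[OF L, of y z x] by simp
  qed
  have anti: "is_antiderivation N bb (dL N bb x)"
    unfolding is_antiderivation_def mv_dL
    using dL_mats brk_leib[OF L, of x] by simp
  have comp: "\<forall>u v. brk N bb u (mv N (dR N bb x) v) = brk N bb u (mv N (dL N bb x) v)"
    unfolding mv_dL mv_dR brk_neg2
  proof (intro allI)
    fix u v show "- brk N bb u (brk N bb v x) = brk N bb u (brk N bb x v)"
      using brk_sym0[OF L, of u x v] by simp
  qed
  show ?thesis using der anti comp by (simp add: Bider_def phi_def)
qed

lemma mv_pl: "mv N (\<lambda>i j. a * A i j + B i j) v = sv a (mv N A v) + mv N B v"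
  by (rule ext) (simp add: mv_def sv_def algebra_simps sum.distrib sum_distrib_left)

lemma Bider_lin: assumes "X \<in> Bider N bb" "Y \<in> Bider N bb"
  shows "pair_lin a X Y \<in> Bider N bb"
proof -
  obtain d D where X: "X = (d, D)" by (cases X)
  obtain e E where Y: "Y = (e, E)" by (cases Y)
  have h: "is_derivation N bb d" "is_antiderivation N bb D"
     "\<forall>x\<in>vecs N. \<forall>y\<in>vecs N. brk N bb x (mv N d y) = brk N bb x (mv N D y)"
     "is_derivation N bb e" "is_antiderivation N bb E"
     "\<forall>x\<in>vecs N. \<forall>y\<in>vecs N. brk N bb x (mv N e y) = brk N bb x (mv N E y)"
    using assms X Y by (auto simp: Bider_def)
  have m: "(\<lambda>i j. a * d i j + e i j) \<in> mats N" "(\<lambda>i j. a * D i j + E i j) \<in> mats N"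
    using h by (auto simp: is_derivation_def is_antiderivation_def mats_def)
  have 1: "is_derivation N bb (\<lambda>i j. a * d i j + e i j)"
    unfolding is_derivation_def mv_pl
  proof (intro conjI m ballI)
    fix x y assume xy: "x \<in> vecs N" "y \<in> vecs N"
    show "sv a (mv N d (brk N bb x y)) + mv N e (brk N bb x y) =
      brk N bb (sv a (mv N d x) + mv N e x) y + brk N bb x (sv a (mv N d y) + mv N e y)"
      using h(1,4) xy unfolding is_derivation_def brk_add1 brk_add2 brk_sv1 brk_sv2
      by (simp add: sv_def fun_eq_iff algebra_simps)
  qed
  have 2: "is_antiderivation N bb (\<lambda>i j. a * D i j + E i j)"
    unfolding is_antiderivation_def mv_pl
  proof (intro conjI m ballI)
    fix x y assume xy: "x \<in> vecs N" "y \<in> vecs N"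
    show "sv a (mv N D (brk N bb x y)) + mv N E (brk N bb x y) =
      brk N bb (sv a (mv N D x) + mv N E x) y - brk N bb (sv a (mv N D y) + mv N E y) x"
    proof -
      have eD: "mv N D (brk N bb x y) = brk N bb (mv N D x) y - brk N bb (mv N D y) x"
        using h(2) xy unfolding is_antiderivation_def by blast
      have eE: "mv N E (brk N bb x y) = brk N bb (mv N E x) y - brk N bb (mv N E y) x"
        using h(5) xy unfolding is_antiderivation_def by blast
      show ?thesis unfolding eD eE brk_add1 brk_add2 brk_sv1 brk_sv2
        by (simp add: sv_def fun_eq_iff algebra_simps)
    qed
  qed
  have 3: "\<forall>x\<in>vecs N. \<forall>y\<in>vecs N. brk N bb x (mv N (\<lambda>i j. a * d i j + e i j) y) = brk N bb x (mv N (\<lambda>i j. a * D i j + E i j) y)"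
    unfolding mv_pl brk_add2 brk_sv2 using h(3,6) by simp
  show ?thesis using 1 2 3 X Y by (simp add: pair_lin_def Bider_def)
qed

lemma mv_bv: "a < N \<Longrightarrow> mv N A (bv a) = (\<lambda>k. A k a)"
  by (rule ext) (simp add: mv_def bv_def if_distrib cong: if_cong)

lemma mat_ext: assumes "A \<in> mats N" "B \<in> mats N" "\<And>v. mv N A v = mv N B v" shows "A = B"
proof (intro ext)
  fix k a show "A k a = B k a"
  proof (cases "a < N")
    case True then show ?thesis using assms(3)[of "bv a"] by (simp add: mv_bv fun_eq_iff)
  next
    case False then show ?thesis using assms(1,2) by (simp add: mats_def)
  qed
qed

lemma mm_mv: "mv N (mm N A B) v = mv N A (mv N B v)"
proof (rule ext)
  fix i
  have "mv N (mm N A B) v i = (\<Sum>k<N. \<Sum>j<N. A i j * B j k * v k)"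
    by (simp add: mv_def mm_def sum_distrib_right)
  also have "\<dots> = (\<Sum>j<N. \<Sum>k<N. A i j * B j k * v k)" by (rule sum.swap)
  also have "\<dots> = mv N A (mv N B v) i" by (simp add: mv_def sum_distrib_left mult_ac)
  finally show "mv N (mm N A B) v i = mv N A (mv N B v) i" .
qed

lemma mv_minus: "mv N (A - B) v = mv N A v - mv N B v"
  by (rule ext) (simp add: mv_def left_diff_distrib sum_subtractf)

lemma mm_mats: "A \<in> mats N \<Longrightarrow> B \<in> mats N \<Longrightarrow> mm N A B \<in> mats N"
  by (auto simp: mats_def mm_def)

lemma mats_minus: "A \<in> mats N \<Longrightarrow> B \<in> mats N \<Longrightarrow> A - B \<in> mats N"
  by (auto simp: mats_def)

lemma phi_bracket: assumes L: "leib N bb"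
  shows "bider_bracket N (phi N bb x) (phi N bb y) = phi N bb (brk N bb x y)"
proof -
  have 1: "mm N (dR N bb x) (dR N bb y) - mm N (dR N bb y) (dR N bb x) = dR N bb (brk N bb x y)"
  proof (rule mat_ext)
    fix v
    show "mv N (mm N (dR N bb x) (dR N bb y) - mm N (dR N bb y) (dR N bb x)) v = mv N (dR N bb (brk N bb x y)) v"
      unfolding mv_minus mm_mv mv_dR brk_neg1
      using brk_leib[OF L, of v y x] brk_sym0[OF L, of v y x] by simp
  qed (auto intro: mats_minus mm_mats dR_mats)
  have 2: "mm N (dL N bb x) (dR N bb y) - mm N (dR N bb y) (dL N bb x) = dL N bb (brk N bb x y)"
  proof (rule mat_ext)
    fix v
    show "mv N (mm N (dL N bb x) (dR N bb y) - mm N (dR N bb y) (dL N bb x)) v = mv N (dL N bb (brk N bb x y)) v"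
      unfolding mv_minus mm_mv mv_dR mv_dL brk_neg2 brk_neg1
      using brk_leib[OF L, of x v y] by simp
  qed (auto intro: mats_minus mm_mats dR_mats dL_mats)
  show ?thesis using 1 2 by (simp add: bider_bracket_def phi_def)
qed


lemma brk_vecs: "brk N bb x y \<in> vecs N" by (simp add: vecs_def brk_def)

lemma generic_iso:
  assumes L: "leib N bb"
  and pp: "\<And>x. x \<in> vecs N \<Longrightarrow> psi (phi N bb x) = x"
  and pv: "\<And>X. X \<in> Bider N bb \<Longrightarrow> psi X \<in> vecs N"
  and pl: "\<And>X Y a. X \<in> Bider N bb \<Longrightarrow> Y \<in> Bider N bb \<Longrightarrow> psi (pair_lin a X Y) = sv a (psi X) + psi Y"
  and ker: "\<And>X. X \<in> Bider N bb \<Longrightarrow> psi X = 0 \<Longrightarrow> X = (0, 0)"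
  shows "bider_iso_to_A N bb"
proof -
  have rep: "X = phi N bb (psi X)" if X: "X \<in> Bider N bb" for X
  proof -
    define x where "x = psi X"
    have xv: "x \<in> vecs N" using pv[OF X] x_def by simp
    define Y where "Y = pair_lin (-1) (phi N bb x) X"
    have Y: "Y \<in> Bider N bb" unfolding Y_def by (rule Bider_lin[OF phi_Bider[OF L] X])
    have "psi Y = sv (-1) x + x" unfolding Y_def pl[OF phi_Bider[OF L] X] pp[OF xv] using x_def by simp
    then have "psi Y = 0" by (simp add: sv_def fun_eq_iff)
    then have "Y = (0, 0)" using ker[OF Y] by simp
    then have "fst X = fst (phi N bb x) \<and> snd X = snd (phi N bb x)"
      unfolding Y_def pair_lin_def by (simp add: fun_eq_iff)
    then show ?thesis unfolding x_def by (simp add: prod_eq_iff)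
  qed
  have bij: "bij_betw psi (Bider N bb) (vecs N)"
  proof (rule bij_betwI')
    fix X Y assume X: "X \<in> Bider N bb" and Y: "Y \<in> Bider N bb"
    show "(psi X = psi Y) = (X = Y)"
    proof
      assume eq: "psi X = psi Y"
      have "X = phi N bb (psi X)" by (rule rep[OF X])
      also have "\<dots> = phi N bb (psi Y)" using eq by simp
      also have "\<dots> = Y" by (rule rep[OF Y, symmetric])
      finally show "X = Y" .
    qed simp
  next
    fix X assume "X \<in> Bider N bb" then show "psi X \<in> vecs N" by (rule pv)
  next
    fix x assume x: "x \<in> vecs N" then show "\<exists>X\<in>Bider N bb. x = psi X"
      by (intro bexI[of _ "phi N bb x"]) (simp add: pp, rule phi_Bider[OF L])
  qed
  have br: "psi (bider_bracket N X Y) = brk N bb (psi X) (psi Y)"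
    if "X \<in> Bider N bb" "Y \<in> Bider N bb" for X Y
  proof -
    have "bider_bracket N X Y = bider_bracket N (phi N bb (psi X)) (phi N bb (psi Y))"
      using arg_cong2[OF rep[OF that(1)] rep[OF that(2)], of "bider_bracket N"] .
    also have "\<dots> = phi N bb (brk N bb (psi X) (psi Y))" by (rule phi_bracket[OF L])
    finally show ?thesis using pp[OF brk_vecs] by simp
  qed
  show ?thesis unfolding bider_iso_to_A_def using bij pl br by blast
qed


lemma bv_vecs: "a < N \<Longrightarrow> bv a \<in> vecs N" by (simp add: vecs_def bv_def)

lemma sum_bv_left: "a < N \<Longrightarrow> (\<Sum>i<N. bv a i * f i) = f a"
proof -
  have "(\<Sum>i<N. bv a i * f i) = (\<Sum>i<N. if i = a then f i else 0)" by (rule sum.cong) (auto simp: bv_def)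
  then show "a < N \<Longrightarrow> ?thesis" by simp
qed
lemma sum_bv_right: "a < N \<Longrightarrow> (\<Sum>i<N. f i * bv a i) = f a"
  using sum_bv_left[of a N f] by (simp add: mult.commute)

lemma brk_bv_bv: "a < N \<Longrightarrow> b < N \<Longrightarrow> brk N bb (bv a) (bv b) = (\<lambda>k. if k < N then bb a b k else 0)"
  by (rule ext) (simp add: brk_def sum_distrib_left[symmetric] sum_distrib_right[symmetric] mult.assoc sum_bv_left)

lemma brk_u_bv: "b < N \<Longrightarrow> k < N \<Longrightarrow> brk N bb u (bv b) k = (\<Sum>i<N. u i * bb i b k)"
proof -
  assume b: "b < N" and k: "k < N"
  have "brk N bb u (bv b) k = (\<Sum>i<N. u i * (\<Sum>j<N. bv b j * bb i j k))"
    using k by (simp add: brk_def sum_distrib_left mult.assoc)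
  then show ?thesis using b by (simp add: sum_bv_left)
qed

lemma brk_bv_u: "a < N \<Longrightarrow> k < N \<Longrightarrow> brk N bb (bv a) u k = (\<Sum>j<N. u j * bb a j k)"
proof -
  assume a: "a < N" and k: "k < N"
  have "brk N bb (bv a) u k = (\<Sum>i<N. bv a i * (\<Sum>j<N. u j * bb i j k))"
    using k by (simp add: brk_def sum_distrib_left mult_ac)
  then show ?thesis using a by (simp add: sum_bv_left)
qed

lemma mv_trunc: "mv N d (\<lambda>k. if k < N then f k else 0) = mv N d f"
  by (rule ext) (simp add: mv_def)

lemma der_eq: assumes "is_derivation N bb d" "a < N" "b < N" "k < N"
  shows "(\<Sum>m<N. d k m * bb a b m) = (\<Sum>i<N. d i a * bb i b k) + (\<Sum>j<N. d j b * bb a j k)"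
proof -
  have "mv N d (brk N bb (bv a) (bv b)) k = brk N bb (mv N d (bv a)) (bv b) k + brk N bb (bv a) (mv N d (bv b)) k"
    using assms bv_vecs[of a N] bv_vecs[of b N] unfolding is_derivation_def by simp
  then show ?thesis using assms(2-4)
    by (simp add: brk_bv_bv mv_trunc brk_u_bv brk_bv_u mv_bv) (simp add: mv_def)
qed

lemma anti_eq: assumes "is_antiderivation N bb D" "a < N" "b < N" "k < N"
  shows "(\<Sum>m<N. D k m * bb a b m) = (\<Sum>i<N. D i a * bb i b k) - (\<Sum>i<N. D i b * bb i a k)"
proof -
  have "mv N D (brk N bb (bv a) (bv b)) k = brk N bb (mv N D (bv a)) (bv b) k - brk N bb (mv N D (bv b)) (bv a) k"
    using assms bv_vecs[of a N] bv_vecs[of b N] unfolding is_antiderivation_def by simp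
  then show ?thesis using assms(2-4)
    by (simp add: brk_bv_bv mv_trunc brk_u_bv brk_bv_u mv_bv) (simp add: mv_def)
qed

lemma comp_eq: assumes "\<forall>x\<in>vecs N. \<forall>y\<in>vecs N. brk N bb x (mv N d y) = brk N bb x (mv N D y)" "a < N" "b < N" "k < N"
  shows "(\<Sum>j<N. d j b * bb a j k) = (\<Sum>j<N. D j b * bb a j k)"
proof -
  have "brk N bb (bv a) (mv N d (bv b)) k = brk N bb (bv a) (mv N D (bv b)) k"
    using assms bv_vecs[of a N] bv_vecs[of b N] by simp
  then show ?thesis using assms(2-4) by (simp add: brk_bv_u mv_bv)
qed

lemma Bider_eqs: assumes "(d, D) \<in> Bider N bb"
  shows "d \<in> mats N" "D \<in> mats N"
  "\<And>a b k. a < N \<Longrightarrow> b < N \<Longrightarrow> k < N \<Longrightarrow> (\<Sum>m<N. d k m * bb a b m) = (\<Sum>i<N. d i a * bb i b k) + (\<Sum>j<N. d j b * bb a j k)"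
  "\<And>a b k. a < N \<Longrightarrow> b < N \<Longrightarrow> k < N \<Longrightarrow> (\<Sum>m<N. D k m * bb a b m) = (\<Sum>i<N. D i a * bb i b k) - (\<Sum>i<N. D i b * bb i a k)"
  "\<And>a b k. a < N \<Longrightarrow> b < N \<Longrightarrow> k < N \<Longrightarrow> (\<Sum>j<N. d j b * bb a j k) = (\<Sum>j<N. D j b * bb a j k)"
proof -
  have h: "is_derivation N bb d" "is_antiderivation N bb D"
     "\<forall>x\<in>vecs N. \<forall>y\<in>vecs N. brk N bb x (mv N d y) = brk N bb x (mv N D y)"
    using assms by (auto simp: Bider_def)
  show "d \<in> mats N" "D \<in> mats N" using h(1,2) by (auto simp: is_derivation_def is_antiderivation_def)
  show "\<And>a b k. a < N \<Longrightarrow> b < N \<Longrightarrow> k < N \<Longrightarrow> (\<Sum>m<N. d k m * bb a b m) = (\<Sum>i<N. d i a * bb i b k) + (\<Sum>j<N. d j b * bb a j k)"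
    by (rule der_eq[OF h(1)])
  show "\<And>a b k. a < N \<Longrightarrow> b < N \<Longrightarrow> k < N \<Longrightarrow> (\<Sum>m<N. D k m * bb a b m) = (\<Sum>i<N. D i a * bb i b k) - (\<Sum>i<N. D i b * bb i a k)"
    by (rule anti_eq[OF h(2)])
  show "\<And>a b k. a < N \<Longrightarrow> b < N \<Longrightarrow> k < N \<Longrightarrow> (\<Sum>j<N. d j b * bb a j k) = (\<Sum>j<N. D j b * bb a j k)"
    by (rule comp_eq[OF h(3)])
qed

lemma sdm: "(\<Sum>m<(N::nat). f m * (if m = q then c else 0)) = (if q < N then f q * c else (0::complex))"
proof -
  have "(\<Sum>m<N. f m * (if m = q then c else 0)) = (\<Sum>m<N. if m = q then f m * c else 0)" by (rule sum.cong) auto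
  then show ?thesis by simp
qed

lemma dR_apply: "k < N \<Longrightarrow> a < N \<Longrightarrow> dR N bb x k a = - (\<Sum>j<N. x j * bb a j k)"
  by (simp add: dR_def)
lemma dL_apply: "k < N \<Longrightarrow> a < N \<Longrightarrow> dL N bb x k a = (\<Sum>i<N. x i * bb i a k)"
  by (simp add: dL_def)

lemma sdm2: "(\<Sum>m<(N::nat). (if m = q then c else 0) * f m) = (if q < N then c * f q else (0::complex))"
  using sdm[where N=N and f=f and q=q and c=c] by (simp add: mult.commute)

lemma R_T: "R_bb n i j k =
   (if 1 \<le> i \<and> i \<le> n - 1 \<and> j = 1 \<and> k = i + 1 then 1 else 0)
 + (if i = 0 \<and> j = 1 \<and> k = 1 then -1 else 0)
 + (if 1 \<le> i \<and> i \<le> n \<and> j = 0 \<and> k = i then of_nat i else 0)"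
  by (simp add: R_bb_def bv_def sv_def)

lemma R_K: "R_bb n a b m =
   (if m = a + 1 then (if 1 \<le> a \<and> a \<le> n - 1 \<and> b = 1 then 1 else 0) else 0)
 + (if m = 1 then (if a = 0 \<and> b = 1 then -1 else 0) else 0)
 + (if m = a then (if 1 \<le> a \<and> a \<le> n \<and> b = 0 then of_nat a else 0) else 0)"
  by (simp add: R_T)

lemma R_I: "R_bb n i b k =
   (if i = k - 1 then (if 2 \<le> k \<and> k \<le> n \<and> b = 1 then 1 else 0) else 0)
 + (if i = 0 then (if b = 1 \<and> k = 1 then -1 else 0) else 0)
 + (if i = k then (if 1 \<le> k \<and> k \<le> n \<and> b = 0 then of_nat k else 0) else 0)"
  by (auto simp: R_T)

lemma R_J: "R_bb n a j k =
   (if j = 1 then (if 1 \<le> a \<and> a \<le> n - 1 \<and> k = a + 1 then 1 else 0) + (if a = 0 \<and> k = 1 then -1 else 0) else 0)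
 + (if j = 0 then (if 1 \<le> a \<and> a \<le> n \<and> k = a then of_nat a else 0) else 0)"
  by (auto simp: R_T)

lemma R_MT: "n \<ge> 2 \<Longrightarrow> (\<Sum>m<n+1. R_bb n a b m * g m) =
   (if 1 \<le> a \<and> a \<le> n - 1 \<and> b = 1 then g (a+1) else 0)
 + (if a = 0 \<and> b = 1 then - g 1 else 0)
 + (if 1 \<le> a \<and> a \<le> n \<and> b = 0 then of_nat a * g a else 0)"
  unfolding R_K by (simp add: distrib_right sum.distrib sdm2) auto

lemma R_MT': "n \<ge> 2 \<Longrightarrow> (\<Sum>m<n+1. g m * R_bb n a b m) =
   (if 1 \<le> a \<and> a \<le> n - 1 \<and> b = 1 then g (a+1) else 0)
 + (if a = 0 \<and> b = 1 then - g 1 else 0)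
 + (if 1 \<le> a \<and> a \<le> n \<and> b = 0 then of_nat a * g a else 0)"
  using R_MT[of n a b g] by (simp add: mult.commute)

lemma R_RT: "n \<ge> 2 \<Longrightarrow> (\<Sum>i<n+1. v i * R_bb n i b k) =
   (if 2 \<le> k \<and> k \<le> n \<and> b = 1 then v (k - 1) else 0)
 + (if b = 1 \<and> k = 1 then - v 0 else 0)
 + (if 1 \<le> k \<and> k \<le> n \<and> b = 0 then of_nat k * v k else 0)"
  unfolding R_I by (simp add: distrib_left sum.distrib sdm) auto

lemma R_LT: "n \<ge> 2 \<Longrightarrow> (\<Sum>j<n+1. v j * R_bb n a j k) =
   (if 1 \<le> a \<and> a \<le> n - 1 \<and> k = a + 1 then v 1 else 0)
 + (if a = 0 \<and> k = 1 then - v 1 else 0)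
 + (if 1 \<le> a \<and> a \<le> n \<and> k = a then of_nat a * v 0 else 0)"
  unfolding R_J by (simp add: distrib_left sum.distrib sdm)

lemma R_leib: assumes "n \<ge> 2" shows "leib (n+1) (R_bb n)"
  unfolding leib_def R_MT[OF assms] using assms by (auto simp: R_T)


lemma R_eqs: assumes X: "(d, D) \<in> Bider (n+1) (R_bb n)" and n: "n \<ge> 2"
  shows "d \<in> mats (n+1)" "D \<in> mats (n+1)"
  "\<And>a b k. a < n+1 \<Longrightarrow> b < n+1 \<Longrightarrow> k < n+1 \<Longrightarrow>
     (if 1 \<le> a \<and> a \<le> n - 1 \<and> b = 1 then d k (a+1) else 0)
   + (if a = 0 \<and> b = 1 then - d k 1 else 0)
   + (if 1 \<le> a \<and> a \<le> n \<and> b = 0 then of_nat a * d k a else 0)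
   = (if 2 \<le> k \<and> k \<le> n \<and> b = 1 then d (k - 1) a else 0)
   + (if b = 1 \<and> k = 1 then - d 0 a else 0)
   + (if 1 \<le> k \<and> k \<le> n \<and> b = 0 then of_nat k * d k a else 0)
   + ((if 1 \<le> a \<and> a \<le> n - 1 \<and> k = a + 1 then d 1 b else 0)
   + (if a = 0 \<and> k = 1 then - d 1 b else 0)
   + (if 1 \<le> a \<and> a \<le> n \<and> k = a then of_nat a * d 0 b else 0))"
  "\<And>a b k. a < n+1 \<Longrightarrow> b < n+1 \<Longrightarrow> k < n+1 \<Longrightarrow>
     (if 1 \<le> a \<and> a \<le> n - 1 \<and> b = 1 then D k (a+1) else 0)
   + (if a = 0 \<and> b = 1 then - D k 1 else 0)
   + (if 1 \<le> a \<and> a \<le> n \<and> b = 0 then of_nat a * D k a else 0)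
   = (if 2 \<le> k \<and> k \<le> n \<and> b = 1 then D (k - 1) a else 0)
   + (if b = 1 \<and> k = 1 then - D 0 a else 0)
   + (if 1 \<le> k \<and> k \<le> n \<and> b = 0 then of_nat k * D k a else 0)
   - ((if 2 \<le> k \<and> k \<le> n \<and> a = 1 then D (k - 1) b else 0)
   + (if a = 1 \<and> k = 1 then - D 0 b else 0)
   + (if 1 \<le> k \<and> k \<le> n \<and> a = 0 then of_nat k * D k b else 0))"
  "\<And>a b k. a < n+1 \<Longrightarrow> b < n+1 \<Longrightarrow> k < n+1 \<Longrightarrow>
     (if 1 \<le> a \<and> a \<le> n - 1 \<and> k = a + 1 then d 1 b else 0)
   + (if a = 0 \<and> k = 1 then - d 1 b else 0)
   + (if 1 \<le> a \<and> a \<le> n \<and> k = a then of_nat a * d 0 b else 0)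
   = (if 1 \<le> a \<and> a \<le> n - 1 \<and> k = a + 1 then D 1 b else 0)
   + (if a = 0 \<and> k = 1 then - D 1 b else 0)
   + (if 1 \<le> a \<and> a \<le> n \<and> k = a then of_nat a * D 0 b else 0)"
proof -
  show "d \<in> mats (n+1)" "D \<in> mats (n+1)" using Bider_eqs[OF X] by auto
  fix a b k assume abk: "a < n+1" "b < n+1" "k < n+1"
  show "(if 1 \<le> a \<and> a \<le> n - 1 \<and> b = 1 then d k (a+1) else 0)
   + (if a = 0 \<and> b = 1 then - d k 1 else 0)
   + (if 1 \<le> a \<and> a \<le> n \<and> b = 0 then of_nat a * d k a else 0)
   = (if 2 \<le> k \<and> k \<le> n \<and> b = 1 then d (k - 1) a else 0)
   + (if b = 1 \<and> k = 1 then - d 0 a else 0)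
   + (if 1 \<le> k \<and> k \<le> n \<and> b = 0 then of_nat k * d k a else 0)
   + ((if 1 \<le> a \<and> a \<le> n - 1 \<and> k = a + 1 then d 1 b else 0)
   + (if a = 0 \<and> k = 1 then - d 1 b else 0)
   + (if 1 \<le> a \<and> a \<le> n \<and> k = a then of_nat a * d 0 b else 0))"
    using Bider_eqs(3)[OF X abk] unfolding R_MT'[OF n] R_RT[OF n] R_LT[OF n] by (simp add: mult.commute)
next
  fix a b k assume abk: "a < n+1" "b < n+1" "k < n+1"
  show "(if 1 \<le> a \<and> a \<le> n - 1 \<and> b = 1 then D k (a+1) else 0)
   + (if a = 0 \<and> b = 1 then - D k 1 else 0)
   + (if 1 \<le> a \<and> a \<le> n \<and> b = 0 then of_nat a * D k a else 0)
   = (if 2 \<le> k \<and> k \<le> n \<and> b = 1 then D (k - 1) a else 0)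
   + (if b = 1 \<and> k = 1 then - D 0 a else 0)
   + (if 1 \<le> k \<and> k \<le> n \<and> b = 0 then of_nat k * D k a else 0)
   - ((if 2 \<le> k \<and> k \<le> n \<and> a = 1 then D (k - 1) b else 0)
   + (if a = 1 \<and> k = 1 then - D 0 b else 0)
   + (if 1 \<le> k \<and> k \<le> n \<and> a = 0 then of_nat k * D k b else 0))"
    using Bider_eqs(4)[OF X abk] unfolding R_MT'[OF n] R_RT[OF n] by (simp add: mult.commute)
next
  fix a b k assume abk: "a < n+1" "b < n+1" "k < n+1"
  show "(if 1 \<le> a \<and> a \<le> n - 1 \<and> k = a + 1 then d 1 b else 0)
   + (if a = 0 \<and> k = 1 then - d 1 b else 0)
   + (if 1 \<le> a \<and> a \<le> n \<and> k = a then of_nat a * d 0 b else 0)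
   = (if 1 \<le> a \<and> a \<le> n - 1 \<and> k = a + 1 then D 1 b else 0)
   + (if a = 0 \<and> k = 1 then - D 1 b else 0)
   + (if 1 \<le> a \<and> a \<le> n \<and> k = a then of_nat a * D 0 b else 0)"
    using Bider_eqs(5)[OF X abk] unfolding R_LT[OF n] by simp
qed


lemma R_ker: assumes X: "(d, D) \<in> Bider (n+1) (R_bb n)" and n: "n \<ge> 2"
  and h1: "D 1 1 = 0" and h2: "\<And>k. 1 \<le> k \<Longrightarrow> k \<le> n \<Longrightarrow> D k 0 = 0"
  shows "d = 0 \<and> D = 0"
proof -
  note E = R_eqs[OF X n]
  have D00: "D 0 0 = 0" using E(4)[of 0 1 1] n h1 by simp
  have Dc0: "D k 0 = 0" if "k \<le> n" for k using that D00 h2[of k] by (cases "k = 0") auto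
  have Dc1: "D k 1 = 0" if k: "k \<le> n" for k
  proof -
    consider "k = 0" | "k = 1" | "k \<ge> 2" by linarith
    then show ?thesis
    proof cases
      case 1 then show ?thesis using E(4)[of 0 1 0] n by simp
    next
      case 2 then show ?thesis using h1 by simp
    next
      case 3
      have "- D k 1 = D (k - 1) 0 - of_nat k * D k 1" using E(4)[of 0 1 k] n k 3 by simp
      then have "(of_nat k - 1) * D k 1 = 0" using Dc0[of "k-1"] k by (simp add: algebra_simps)
      moreover have "(of_nat k - 1 :: complex) \<noteq> 0" using 3 by simp
      ultimately show ?thesis by simp
    qed
  qed
  have Dcj: "D k j = 0" if k: "k \<le> n" and j: "2 \<le> j" "j \<le> n" for k j
  proof (cases "k = 0")
    case True then show ?thesis using E(4)[of 1 j 1] n j by simp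
  next
    case False
    have "of_nat k * D k j = 0" using E(4)[of 0 j k] n j k False by simp
    then show ?thesis using False by simp
  qed
  have Dz: "D k j = 0" if "k \<le> n" "j \<le> n" for k j
  proof -
    consider "j = 0" | "j = 1" | "j \<ge> 2" by linarith
    then show ?thesis using that Dc0 Dc1 Dcj by cases auto
  qed
  have D0: "D = 0"
  proof (intro ext)
    fix k j show "D k j = 0 k j"
      using Dz[of k j] E(2) by (cases "k \<le> n \<and> j \<le> n") (auto simp: mats_def)
  qed
  have r1: "d 1 b = 0" if "b \<le> n" for b using E(5)[of 0 b 1] n that Dz[of 1 b] by simp
  have r0: "d 0 b = 0" if "b \<le> n" for b using E(5)[of 1 b 1] n that Dz[of 0 b] by simp
  have c0: "d k 0 = 0" if "k \<le> n" for k
  proof -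
    consider "k = 0" | "k = 1" | "k \<ge> 2" by linarith
    then show ?thesis
    proof cases
      case 3
      have "of_nat k * d k 0 = 0" using E(3)[of 0 0 k] n that 3 by simp
      then show ?thesis using 3 by simp
    qed (use r0 r1 n in auto)
  qed
  have off: "d k i = 0" if "1 \<le> k" "k \<le> n" "1 \<le> i" "i \<le> n" "k \<noteq> i" for k i
  proof -
    have "of_nat i * d k i = of_nat k * d k i" using E(3)[of i 0 k] n that r0 r1 by auto
    then have "(of_nat i - of_nat k) * d k i = 0" by (simp add: algebra_simps)
    moreover have "(of_nat i - of_nat k :: complex) \<noteq> 0" using that by simp
    ultimately show ?thesis by simp
  qed
  have diag: "1 \<le> i \<longrightarrow> i \<le> n \<longrightarrow> d i i = 0" for i
  proof (induction i)
    case 0 then show ?case by simp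
  next
    case (Suc i)
    show ?case
    proof (cases "i = 0")
      case True then show ?thesis using r1 n by simp
    next
      case False
      show ?thesis
      proof (intro impI)
        assume "Suc i \<le> n"
        then have i1: "i \<le> n - 1" by simp
        have "d 1 1 = 0" using r1[of 1] n by simp
        then have "d (i+1) (i+1) = d i i" using E(3)[of i 1 "i+1"] n False i1 \<open>Suc i \<le> n\<close> by simp
        then show "d (Suc i) (Suc i) = 0" using Suc.IH False \<open>Suc i \<le> n\<close> by simp
      qed
    qed
  qed
  have dz: "d k j = 0" if "k \<le> n" "j \<le> n" for k j
  proof -
    consider "k = 0" | "k \<ge> 1 \<and> j = 0" | "k \<ge> 1 \<and> j \<ge> 1 \<and> k \<noteq> j" | "k \<ge> 1 \<and> k = j" by linarith
    then show ?thesis using that r0 c0 off diag by cases auto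
  qed
  have d0: "d = 0"
  proof (intro ext)
    fix k j show "d k j = 0 k j"
      using dz[of k j] E(1) by (cases "k \<le> n \<and> j \<le> n") (auto simp: mats_def)
  qed
  show ?thesis using d0 D0 by simp
qed


definition psiR :: "nat \<Rightarrow> (nat \<Rightarrow> nat \<Rightarrow> complex) \<times> (nat \<Rightarrow> nat \<Rightarrow> complex) \<Rightarrow> nat \<Rightarrow> complex" where
  "psiR n X = (\<lambda>k. if k = 0 then - snd X 1 1 else if k \<le> n then snd X k 0 / of_nat k else 0)"

theorem R_iso: assumes n: "2 \<le> n" shows "bider_iso_to_A (n + 1) (R_bb n)"
proof (rule generic_iso[where psi = "psiR n"])
  show "leib (n + 1) (R_bb n)" by (rule R_leib[OF n])
next
  fix x assume x: "x \<in> vecs (n+1)"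
  show "psiR n (phi (n + 1) (R_bb n) x) = x"
  proof (rule ext)
    fix k
    have d11: "dL (n+1) (R_bb n) x 1 1 = - x 0"
    proof -
      have "dL (n+1) (R_bb n) x 1 1 = (\<Sum>i<n+1. x i * R_bb n i 1 1)" by (rule dL_apply) (use n in auto)
      also have "\<dots> = - x 0" unfolding R_RT[OF n] using n by simp
      finally show ?thesis .
    qed
    have dk0: "dL (n+1) (R_bb n) x k 0 = of_nat k * x k" if "1 \<le> k" "k \<le> n"
    proof -
      have "dL (n+1) (R_bb n) x k 0 = (\<Sum>i<n+1. x i * R_bb n i 0 k)" by (rule dL_apply) (use that in auto)
      also have "\<dots> = of_nat k * x k" unfolding R_RT[OF n] using that by simp
      finally show ?thesis .
    qed
    show "psiR n (phi (n + 1) (R_bb n) x) k = x k"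
      using x d11 dk0 by (auto simp: psiR_def phi_def vecs_def)
  qed
next
  fix X assume "X \<in> Bider (n + 1) (R_bb n)"
  show "psiR n X \<in> vecs (n + 1)" by (simp add: psiR_def vecs_def)
next
  fix X Y :: "(nat \<Rightarrow> nat \<Rightarrow> complex) \<times> (nat \<Rightarrow> nat \<Rightarrow> complex)" and a :: complex
  show "psiR n (pair_lin a X Y) = sv a (psiR n X) + psiR n Y"
    by (rule ext) (simp add: psiR_def pair_lin_def sv_def add_divide_distrib)
next
  fix X assume X: "X \<in> Bider (n + 1) (R_bb n)" and p: "psiR n X = 0"
  obtain d D where XdD: "X = (d, D)" by (cases X)
  have h1: "D 1 1 = 0" using fun_cong[OF p, of 0] XdD by (simp add: psiR_def)
  have h2: "D k 0 = 0" if "1 \<le> k" "k \<le> n" for k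
    using fun_cong[OF p, of k] XdD that by (simp add: psiR_def)
  show "X = (0, 0)" using R_ker[OF X[unfolded XdD] n h1 h2] XdD by simp
qed

lemma RF_T: "RF_bb n p q k =
   (if 3 \<le> p \<and> p \<le> n \<and> q = 2 \<and> k = p + 1 then 1 else 0)
 + (if p = 2 \<and> q = 1 \<and> k = 2 then 1 else 0)
 + (if p = 1 \<and> q = 2 \<and> k = 2 then -1 else 0)
 + (if 3 \<le> p \<and> p \<le> n + 1 \<and> q = 0 \<and> k = p then 1 else 0)
 + (if 3 \<le> p \<and> p \<le> n + 1 \<and> q = 1 \<and> k = p then of_nat (p - 2) else 0)"
  by (auto simp: RF_bb_def bv_def sv_def)

lemma RF_K: "RF_bb n a b m =
   (if m = a + 1 then (if 3 \<le> a \<and> a \<le> n \<and> b = 2 then 1 else 0) else 0)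
 + (if m = 2 then (if a = 2 \<and> b = 1 then 1 else 0) + (if a = 1 \<and> b = 2 then -1 else 0) else 0)
 + (if m = a then (if 3 \<le> a \<and> a \<le> n + 1 \<and> b = 0 then 1 else 0)
      + (if 3 \<le> a \<and> a \<le> n + 1 \<and> b = 1 then of_nat (a - 2) else 0) else 0)"
  by (auto simp: RF_T)

lemma RF_I: "RF_bb n i b k =
   (if i = k - 1 then (if 4 \<le> k \<and> k \<le> n + 1 \<and> b = 2 then 1 else 0) else 0)
 + (if i = 2 then (if b = 1 \<and> k = 2 then 1 else 0) else 0)
 + (if i = 1 then (if b = 2 \<and> k = 2 then -1 else 0) else 0)
 + (if i = k then (if 3 \<le> k \<and> k \<le> n + 1 \<and> b = 0 then 1 else 0)
      + (if 3 \<le> k \<and> k \<le> n + 1 \<and> b = 1 then of_nat (k - 2) else 0) else 0)"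
  by (auto simp: RF_T)

lemma RF_J: "RF_bb n a j k =
   (if j = 2 then (if 3 \<le> a \<and> a \<le> n \<and> k = a + 1 then 1 else 0) + (if a = 1 \<and> k = 2 then -1 else 0) else 0)
 + (if j = 1 then (if a = 2 \<and> k = 2 then 1 else 0) + (if 3 \<le> a \<and> a \<le> n + 1 \<and> k = a then of_nat (a - 2) else 0) else 0)
 + (if j = 0 then (if 3 \<le> a \<and> a \<le> n + 1 \<and> k = a then 1 else 0) else 0)"
  by (auto simp: RF_T)

lemma RF_MT: "n \<ge> 4 \<Longrightarrow> (\<Sum>m<n+2. RF_bb n a b m * g m) =
   (if 3 \<le> a \<and> a \<le> n \<and> b = 2 then g (a+1) else 0)
 + (if a = 2 \<and> b = 1 then g 2 else 0)
 - (if a = 1 \<and> b = 2 then g 2 else 0)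
 + (if 3 \<le> a \<and> a \<le> n + 1 \<and> b = 0 then g a else 0)
 + (if 3 \<le> a \<and> a \<le> n + 1 \<and> b = 1 then of_nat (a - 2) * g a else 0)"
  unfolding RF_K by (simp add: distrib_right sum.distrib sdm2)

lemma RF_MT': "n \<ge> 4 \<Longrightarrow> (\<Sum>m<n+2. g m * RF_bb n a b m) =
   (if 3 \<le> a \<and> a \<le> n \<and> b = 2 then g (a+1) else 0)
 + (if a = 2 \<and> b = 1 then g 2 else 0)
 - (if a = 1 \<and> b = 2 then g 2 else 0)
 + (if 3 \<le> a \<and> a \<le> n + 1 \<and> b = 0 then g a else 0)
 + (if 3 \<le> a \<and> a \<le> n + 1 \<and> b = 1 then of_nat (a - 2) * g a else 0)"
  using RF_MT[of n a b g] by (simp add: mult.commute)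

lemma RF_RT: "n \<ge> 4 \<Longrightarrow> (\<Sum>i<n+2. v i * RF_bb n i b k) =
   (if 4 \<le> k \<and> k \<le> n + 1 \<and> b = 2 then v (k - 1) else 0)
 + (if b = 1 \<and> k = 2 then v 2 else 0)
 - (if b = 2 \<and> k = 2 then v 1 else 0)
 + (if 3 \<le> k \<and> k \<le> n + 1 \<and> b = 0 then v k else 0)
 + (if 3 \<le> k \<and> k \<le> n + 1 \<and> b = 1 then of_nat (k - 2) * v k else 0)"
  unfolding RF_I by (simp add: distrib_left sum.distrib sdm) auto

lemma RF_LT: "n \<ge> 4 \<Longrightarrow> (\<Sum>j<n+2. v j * RF_bb n a j k) =
   (if 3 \<le> a \<and> a \<le> n \<and> k = a + 1 then v 2 else 0)
 - (if a = 1 \<and> k = 2 then v 2 else 0)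
 + (if a = 2 \<and> k = 2 then v 1 else 0)
 + (if 3 \<le> a \<and> a \<le> n + 1 \<and> k = a then of_nat (a - 2) * v 1 else 0)
 + (if 3 \<le> a \<and> a \<le> n + 1 \<and> k = a then v 0 else 0)"
  unfolding RF_J by (simp add: distrib_left sum.distrib sdm)

lemma RF_leib: assumes "n \<ge> 4" shows "leib (n+2) (RF_bb n)"
  unfolding leib_def RF_MT[OF assms] using assms by (auto simp: RF_T)


lemma RF_ker: assumes X: "(d, D) \<in> Bider (n+2) (RF_bb n)" and n: "n \<ge> 4"
  and h1: "D 2 2 = 0" and h2: "d 3 3 = 0" and h3: "D 2 1 = 0"
  and h4: "\<And>p. 3 \<le> p \<Longrightarrow> p \<le> n + 1 \<Longrightarrow> D p 0 = 0"
  shows "d = 0 \<and> D = 0"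
proof -
  note E3 = Bider_eqs(3)[OF X, unfolded RF_MT'[OF n] RF_RT[OF n] RF_LT[OF n]]
  note E4 = Bider_eqs(4)[OF X, unfolded RF_MT'[OF n] RF_RT[OF n]]
  note E5 = Bider_eqs(5)[OF X, unfolded RF_LT[OF n]]
  have A1: "D 2 0 = 0" using E4[of 0 1 2] n by simp
  have A2: "D p 1 = 0" if "3 \<le> p" "p \<le> n + 1" for p using E4[of 0 1 p] n that h4[OF that] by simp
  have A3: "D 1 0 = 0" using E4[of 0 2 2] n by simp
  have A4: "D 3 2 = 0" using E4[of 0 2 3] n by simp
  have A5: "D p 2 = 0" if "4 \<le> p" "p \<le> n + 1" for p using E4[of 0 2 p] n that h4[of "p - 1"] by simp
  have A6a: "D 0 2 = 0" using E4[of 1 2 0] n by simp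
  have A6b: "D 1 2 = 0" using E4[of 1 2 1] n by simp
  have A6c: "D 1 1 = 0" using E4[of 1 2 2] n by simp
  have A7: "D k q = 0" if "k \<le> n + 1" "3 \<le> q" "q \<le> n + 1" for k q
  proof (cases "k \<ge> 3")
    case True then show ?thesis using E4[of 0 q k] n that by simp
  next
    case False then show ?thesis using E4[of q 0 k] n that by simp
  qed
  have d10: "d 1 0 = 0" using E3[of 0 2 2] n by simp
  have d00: "d 0 0 = 0" using E3[of 3 0 3] n d10 by simp
  have d11: "d 1 1 = 0" using E3[of 1 2 2] n by simp
  have d01: "d 0 1 = 0" using E3[of 3 1 3] n d11 by simp
  have cmp: "d 0 b = D 0 b \<and> d 1 b = D 1 b \<and> d 2 b = D 2 b" if "b \<le> n + 1" for b
  proof -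
    have "d 1 b = D 1 b" using E5[of 2 b 2] n that by simp
    moreover have "d 2 b = D 2 b" using E5[of 1 b 2] n that by simp
    moreover have "d 1 b + d 0 b = D 1 b + D 0 b" using E5[of 3 b 3] n that by simp
    ultimately show ?thesis by simp
  qed
  have D00: "D 0 0 = 0" using cmp[of 0] d00 by simp
  have D01: "D 0 1 = 0" using cmp[of 1] d01 by simp
  have Dz: "D k q = 0" if "k \<le> n + 1" "q \<le> n + 1" for k q
  proof -
    consider "q = 0" | "q = 1" | "q = 2" | "q \<ge> 3" by linarith
    then show ?thesis
    proof cases
      case 1
      then consider "k = 0" | "k = 1" | "k = 2" | "k \<ge> 3" by linarith
      then show ?thesis using 1 D00 A3 A1 h4 that by cases auto
    next
      case 2
      then consider "k = 0" | "k = 1" | "k = 2" | "k \<ge> 3" by linarith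
      then show ?thesis using 2 D01 A6c h3 A2 that by cases auto
    next
      case 3
      then consider "k = 0" | "k = 1" | "k = 2" | "k = 3" | "k \<ge> 4" by linarith
      then show ?thesis using 3 A6a A6b h1 A4 A5 that by cases auto
    next
      case 4 then show ?thesis using A7 that by simp
    qed
  qed
  have D0: "D = 0"
  proof (intro ext)
    fix k j show "D k j = 0 k j"
      using Dz[of k j] Bider_eqs(2)[OF X] by (cases "k \<le> n + 1 \<and> j \<le> n + 1") (auto simp: mats_def)
  qed
  have rows: "d 0 b = 0 \<and> d 1 b = 0 \<and> d 2 b = 0" if "b \<le> n + 1" for b
    using cmp[OF that] Dz[of 0 b] Dz[of 1 b] Dz[of 2 b] that n by simp
  have B1: "d p 0 = 0" if "3 \<le> p" "p \<le> n + 1" for p using E3[of 0 0 p] n that by simp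
  have B2: "d p 1 = 0" if "3 \<le> p" "p \<le> n + 1" for p using E3[of 1 0 p] n that by simp
  have B3: "d p 2 = 0" if "3 \<le> p" "p \<le> n + 1" for p using E3[of 2 0 p] n that by simp
  have B4: "d p q = 0" if "3 \<le> p" "p \<le> n + 1" "3 \<le> q" "q \<le> n + 1" "p \<noteq> q" for p q
  proof -
    have "of_nat (q - 2) * d p q = of_nat (p - 2) * d p q"
      using E3[of q 1 p] n that rows[of 1] rows[of 0] by auto
    then have "(of_nat (q - 2) - of_nat (p - 2)) * d p q = 0" by (simp add: algebra_simps)
    moreover have "(of_nat (q - 2) - of_nat (p - 2) :: complex) \<noteq> 0" using that by simp
    ultimately show ?thesis by simp
  qed
  have B5: "3 \<le> q \<longrightarrow> q \<le> n + 1 \<longrightarrow> d q q = 0" for q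
  proof (induction q)
    case 0 then show ?case by simp
  next
    case (Suc q)
    show ?case
    proof (cases "q \<le> 2")
      case True then show ?thesis using h2 by (auto simp: le_Suc_eq)
    next
      case False
      show ?thesis
      proof (intro impI)
        assume q: "Suc q \<le> n + 1"
        have "d 2 2 = 0" using rows[of 2] n by simp
        then have "d (q+1) (q+1) = d q q" using E3[of q 2 "q+1"] n False q by simp
        then show "d (Suc q) (Suc q) = 0" using Suc.IH False q by simp
      qed
    qed
  qed
  have dz: "d k j = 0" if "k \<le> n + 1" "j \<le> n + 1" for k j
  proof -
    consider "k \<le> 2" | "k \<ge> 3 \<and> j = 0" | "k \<ge> 3 \<and> j = 1" | "k \<ge> 3 \<and> j = 2" | "k \<ge> 3 \<and> j \<ge> 3 \<and> k \<noteq> j" | "k \<ge> 3 \<and> k = j" by linarith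
    then show ?thesis
    proof cases
      case 1
      then consider "k = 0" | "k = 1" | "k = 2" by linarith
      then show ?thesis using rows[OF that(2)] by cases auto
    qed (use that B1 B2 B3 B4 B5 in auto)
  qed
  have d0: "d = 0"
  proof (intro ext)
    fix k j show "d k j = 0 k j"
      using dz[of k j] Bider_eqs(1)[OF X] by (cases "k \<le> n + 1 \<and> j \<le> n + 1") (auto simp: mats_def)
  qed
  show ?thesis using d0 D0 by simp
qed


definition psiRF :: "nat \<Rightarrow> (nat \<Rightarrow> nat \<Rightarrow> complex) \<times> (nat \<Rightarrow> nat \<Rightarrow> complex) \<Rightarrow> nat \<Rightarrow> complex" where
  "psiRF n X = (\<lambda>k. if k = 0 then snd X 2 2 - fst X 3 3 else if k = 1 then - snd X 2 2
     else if k = 2 then snd X 2 1 else if k \<le> n + 1 then snd X k 0 else 0)"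

theorem RF_iso: assumes n: "4 \<le> n" shows "bider_iso_to_A (n + 2) (RF_bb n)"
proof (rule generic_iso[where psi = "psiRF n"])
  show "leib (n + 2) (RF_bb n)" by (rule RF_leib[OF n])
next
  fix x assume x: "x \<in> vecs (n+2)"
  have dL: "dL (n+2) (RF_bb n) x k a = (\<Sum>i<n+2. x i * RF_bb n i a k)" if "k < n + 2" "a < n + 2" for k a
    by (rule dL_apply) (use that in auto)
  have dR: "dR (n+2) (RF_bb n) x k a = - (\<Sum>j<n+2. x j * RF_bb n a j k)" if "k < n + 2" "a < n + 2" for k a
    by (rule dR_apply) (use that in auto)
  note dL' = dL[unfolded RF_RT[OF n]] and dR' = dR[unfolded RF_LT[OF n]]
  show "psiRF n (phi (n + 2) (RF_bb n) x) = x"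
  proof (rule ext)
    fix k
    have a: "dL (n+2) (RF_bb n) x 2 2 = - x 1" using dL'[of 2 2] n by simp
    have b: "dR (n+2) (RF_bb n) x 3 3 = - (x 1 + x 0)" using dR'[of 3 3] n by simp
    have c: "dL (n+2) (RF_bb n) x 2 1 = x 2" using dL'[of 2 1] n by simp
    have e: "dL (n+2) (RF_bb n) x k 0 = x k" if "3 \<le> k" "k \<le> n + 1" using dL'[of k 0] n that by simp
    show "psiRF n (phi (n + 2) (RF_bb n) x) k = x k"
      using x a b c e by (auto simp: psiRF_def phi_def vecs_def)
  qed
next
  fix X assume "X \<in> Bider (n + 2) (RF_bb n)"
  show "psiRF n X \<in> vecs (n + 2)" using n by (simp add: psiRF_def vecs_def)
next
  fix X Y :: "(nat \<Rightarrow> nat \<Rightarrow> complex) \<times> (nat \<Rightarrow> nat \<Rightarrow> complex)" and a :: complex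
  show "psiRF n (pair_lin a X Y) = sv a (psiRF n X) + psiRF n Y"
    by (rule ext) (simp add: psiRF_def pair_lin_def sv_def algebra_simps)
next
  fix X assume X: "X \<in> Bider (n + 2) (RF_bb n)" and p: "psiRF n X = 0"
  obtain d D where XdD: "X = (d, D)" by (cases X)
  have h1: "D 2 2 = 0" using fun_cong[OF p, of 1] XdD by (simp add: psiRF_def)
  have h2: "d 3 3 = 0" using fun_cong[OF p, of 0] XdD h1 by (simp add: psiRF_def)
  have h3: "D 2 1 = 0" using fun_cong[OF p, of 2] XdD n by (simp add: psiRF_def)
  have h4: "D k 0 = 0" if "3 \<le> k" "k \<le> n + 1" for k
    using fun_cong[OF p, of k] XdD that by (simp add: psiRF_def)
  show "X = (0, 0)" using RF_ker[OF X[unfolded XdD] n h1 h2 h3 h4] XdD by simp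
qed

definition Lg :: "complex \<Rightarrow> nat \<Rightarrow> nat \<Rightarrow> nat \<Rightarrow> nat \<Rightarrow> complex" where
  "Lg e n p q k =
   (if p = 2 \<and> q = 2 \<and> k = 4 then 1 else 0)
 + (if 4 \<le> p \<and> p \<le> n \<and> q = 2 \<and> k = p + 1 then 1 else 0)
 + (if p = 2 \<and> q = 1 \<and> k = 2 then 1 else 0)
 - (if p = 1 \<and> q = 2 \<and> k = 2 then 1 else 0)
 + (if p = 3 \<and> q = 0 \<and> k = 3 then 1 else 0)
 + (if 4 \<le> p \<and> p \<le> n + 1 \<and> q = 1 \<and> k = p then of_nat (p - 2) else 0)
 - (if p = 0 \<and> q = 3 \<and> k = 3 then e else 0)"

lemma L2_eq: "L2_bb n = Lg 0 n"
  by (intro ext) (auto simp: L2_bb_def Lg_def bv_def sv_def)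

lemma L1_eq: "L1_bb n = Lg 1 n"
  by (intro ext) (auto simp: L1_bb_def L2_bb_def Lg_def bv_def sv_def)

lemma L_K: "Lg e n a b m =
   (if m = 4 then (if a = 2 \<and> b = 2 then 1 else 0) else 0)
 + (if m = a + 1 then (if 4 \<le> a \<and> a \<le> n \<and> b = 2 then 1 else 0) else 0)
 + (if m = 2 then (if a = 2 \<and> b = 1 then 1 else 0) - (if a = 1 \<and> b = 2 then 1 else 0) else 0)
 + (if m = 3 then (if a = 3 \<and> b = 0 then 1 else 0) - (if a = 0 \<and> b = 3 then e else 0) else 0)
 + (if m = a then (if 4 \<le> a \<and> a \<le> n + 1 \<and> b = 1 then of_nat (a - 2) else 0) else 0)"
  by (auto simp: Lg_def)

lemma L_I: "Lg e n i b k =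
   (if i = 2 then (if b = 2 \<and> k = 4 then 1 else 0) + (if b = 1 \<and> k = 2 then 1 else 0) else 0)
 + (if i = k - 1 then (if 5 \<le> k \<and> k \<le> n + 1 \<and> b = 2 then 1 else 0) else 0)
 + (if i = 1 then - (if b = 2 \<and> k = 2 then 1 else 0) else 0)
 + (if i = 3 then (if b = 0 \<and> k = 3 then 1 else 0) else 0)
 + (if i = 0 then - (if b = 3 \<and> k = 3 then e else 0) else 0)
 + (if i = k then (if 4 \<le> k \<and> k \<le> n + 1 \<and> b = 1 then of_nat (k - 2) else 0) else 0)"
  by (auto simp: Lg_def)

lemma L_J: "Lg e n a j k =
   (if j = 2 then (if a = 2 \<and> k = 4 then 1 else 0) + (if 4 \<le> a \<and> a \<le> n \<and> k = a + 1 then 1 else 0)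
        - (if a = 1 \<and> k = 2 then 1 else 0) else 0)
 + (if j = 1 then (if a = 2 \<and> k = 2 then 1 else 0) + (if 4 \<le> a \<and> a \<le> n + 1 \<and> k = a then of_nat (a - 2) else 0) else 0)
 + (if j = 0 then (if a = 3 \<and> k = 3 then 1 else 0) else 0)
 + (if j = 3 then - (if a = 0 \<and> k = 3 then e else 0) else 0)"
  by (auto simp: Lg_def)

lemma L_MT: "n \<ge> 4 \<Longrightarrow> (\<Sum>m<n+2. Lg e n a b m * g m) =
   (if a = 2 \<and> b = 2 then g 4 else 0)
 + (if 4 \<le> a \<and> a \<le> n \<and> b = 2 then g (a+1) else 0)
 + (if a = 2 \<and> b = 1 then g 2 else 0)
 - (if a = 1 \<and> b = 2 then g 2 else 0)
 + (if a = 3 \<and> b = 0 then g 3 else 0)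
 - (if a = 0 \<and> b = 3 then e * g 3 else 0)
 + (if 4 \<le> a \<and> a \<le> n + 1 \<and> b = 1 then of_nat (a - 2) * g a else 0)"
  unfolding L_K by (simp add: distrib_right left_diff_distrib sum.distrib sum_subtractf sdm2)

lemma L_MT': "n \<ge> 4 \<Longrightarrow> (\<Sum>m<n+2. g m * Lg e n a b m) =
   (if a = 2 \<and> b = 2 then g 4 else 0)
 + (if 4 \<le> a \<and> a \<le> n \<and> b = 2 then g (a+1) else 0)
 + (if a = 2 \<and> b = 1 then g 2 else 0)
 - (if a = 1 \<and> b = 2 then g 2 else 0)
 + (if a = 3 \<and> b = 0 then g 3 else 0)
 - (if a = 0 \<and> b = 3 then e * g 3 else 0)
 + (if 4 \<le> a \<and> a \<le> n + 1 \<and> b = 1 then of_nat (a - 2) * g a else 0)"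
  using L_MT[of n e a b g] by (simp add: mult.commute)

lemma L_RT: "n \<ge> 4 \<Longrightarrow> (\<Sum>i<n+2. v i * Lg e n i b k) =
   (if b = 2 \<and> k = 4 then v 2 else 0)
 + (if b = 1 \<and> k = 2 then v 2 else 0)
 + (if 5 \<le> k \<and> k \<le> n + 1 \<and> b = 2 then v (k - 1) else 0)
 - (if b = 2 \<and> k = 2 then v 1 else 0)
 + (if b = 0 \<and> k = 3 then v 3 else 0)
 - (if b = 3 \<and> k = 3 then e * v 0 else 0)
 + (if 4 \<le> k \<and> k \<le> n + 1 \<and> b = 1 then of_nat (k - 2) * v k else 0)"
  unfolding L_I by (simp add: distrib_left right_diff_distrib sum.distrib sum_subtractf sdm) (auto simp: algebra_simps)

lemma L_LT: "n \<ge> 4 \<Longrightarrow> (\<Sum>j<n+2. v j * Lg e n a j k) =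
   (if a = 2 \<and> k = 4 then v 2 else 0)
 + (if 4 \<le> a \<and> a \<le> n \<and> k = a + 1 then v 2 else 0)
 - (if a = 1 \<and> k = 2 then v 2 else 0)
 + (if a = 2 \<and> k = 2 then v 1 else 0)
 + (if 4 \<le> a \<and> a \<le> n + 1 \<and> k = a then of_nat (a - 2) * v 1 else 0)
 + (if a = 3 \<and> k = 3 then v 0 else 0)
 - (if a = 0 \<and> k = 3 then e * v 3 else 0)"
  unfolding L_J by (simp add: distrib_left right_diff_distrib sum.distrib sum_subtractf sdm) (auto simp: algebra_simps)

lemma L_leib_e: assumes n: "n \<ge> 4" and e: "e * e = e"
  and abck: "a < n + 2" "b < n + 2" "c < n + 2" "k < n + 2"
  shows "(\<Sum>m<n+2. Lg e n b c m * Lg e n a m k) =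
      (\<Sum>m<n+2. Lg e n a b m * Lg e n m c k) - (\<Sum>m<n+2. Lg e n a c m * Lg e n m b k)"
proof -
  consider "b = 0" | "b = 1" | "b = 2" | "b = 3" | "b \<ge> 4" by linarith
  then show ?thesis
  proof cases
    case 1 then show ?thesis unfolding L_MT[OF n] using n e abck by (auto simp: Lg_def)
  next
    case 2 then show ?thesis unfolding L_MT[OF n] using n e abck by (auto simp: Lg_def)
  next
    case 3 then show ?thesis unfolding L_MT[OF n] using n e abck by (auto simp: Lg_def)
  next
    case 4 then show ?thesis unfolding L_MT[OF n] using n e abck by (auto simp: Lg_def)
  next
    case 5 then show ?thesis unfolding L_MT[OF n] using n e abck by (auto simp: Lg_def)
  qed
qed


lemma L_leib: assumes n: "n \<ge> 4" and e: "e * e = e" shows "leib (n+2) (Lg e n)"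
  unfolding leib_def using L_leib_e[OF n e] by blast

lemma L_ker: assumes X: "(d, D) \<in> Bider (n+2) (Lg e n)" and n: "n \<ge> 4"
  and h1: "d 3 3 = 0" and h2: "D 2 2 = 0" and h3: "D 2 1 = 0" and h4: "D 3 0 = 0"
  and h5: "\<And>p. 4 \<le> p \<Longrightarrow> p \<le> n + 1 \<Longrightarrow> D p 1 = 0"
  shows "d = 0 \<and> D = 0"
proof -
  note E3 = Bider_eqs(3)[OF X, unfolded L_MT'[OF n] L_RT[OF n] L_LT[OF n]]
  note E4 = Bider_eqs(4)[OF X, unfolded L_MT'[OF n] L_RT[OF n]]
  note E5 = Bider_eqs(5)[OF X, unfolded L_LT[OF n]]
  have F1: "D 2 0 = 0" using E4[of 0 1 2] n by simp
  have F2: "D k 0 = 0" if "4 \<le> k" "k \<le> n + 1" for k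
  proof -
    have "of_nat (k - 2) * D k 0 = 0" using E4[of 0 1 k] n that by simp
    moreover have "(of_nat (k - 2) :: complex) \<noteq> 0" by (simp only: of_nat_eq_0_iff) (use that in simp)
    ultimately show ?thesis by simp
  qed
  have F3: "D 3 1 = 0" using E4[of 0 1 3] n by simp
  have F4: "D 1 0 = 0" using E4[of 0 2 2] n by simp
  have F5: "D 3 2 = 0" using E4[of 0 2 3] n by simp
  have F6: "d 0 0 = 0" using E3[of 3 0 3] n by simp
  have cmp: "d 0 b = D 0 b \<and> d 1 b = D 1 b \<and> d 2 b = D 2 b \<and> e * d 3 b = e * D 3 b" if "b \<le> n + 1" for b
  proof -
    have "d 0 b = D 0 b" using E5[of 3 b 3] n that by simp
    moreover have "d 1 b = D 1 b" using E5[of 2 b 2] n that by simp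
    moreover have "d 2 b = D 2 b" using E5[of 1 b 2] n that by simp
    moreover have "e * d 3 b = e * D 3 b" using E5[of 0 b 3] n that by simp
    ultimately show ?thesis by simp
  qed
  have F7: "D 0 0 = 0" using cmp[of 0] F6 by simp
  have F8a: "D 1 1 = 0" using E4[of 1 2 2] n by simp
  have F8b: "D 0 2 = 0" using E4[of 1 2 0] n by simp
  have F8c: "D 1 2 = 0" using E4[of 1 2 1] n by simp
  have F8d: "D 4 2 = 0" using E4[of 1 2 4] n h3 by simp
  have F8e: "D k 2 = 0" if "5 \<le> k" "k \<le> n + 1" for k
  proof -
    have e1: "of_nat (k - 3) * D k 2 = D (k - 1) 1" using E4[of 1 2 k] n that
      by (simp add: of_nat_diff algebra_simps)
    have e2: "D (k - 1) 1 = 0" using h5[of "k - 1"] that by simp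
    have e3: "(of_nat (k - 3) :: complex) \<noteq> 0" by (simp only: of_nat_eq_0_iff) (use that in simp)
    have "of_nat (k - 3) * D k 2 = 0" using e1 e2 by (simp only:)
    then show ?thesis using e3 by (simp only: mult_eq_0_iff) blast
  qed
  have F9: "d 0 1 = 0" using E3[of 3 1 3] n by simp
  have F10: "D 0 1 = 0" using cmp[of 1] F9 n by simp
  have C3a: "D k 3 = 0" if "k \<le> n + 1" "k \<noteq> 3" for k using E4[of 3 0 k] n that by simp
  have C3b: "D 3 3 = 0"
  proof -
    have "(1 - e) * D 3 3 = 0" using E4[of 0 3 3] n F7 by (simp add: algebra_simps)
    moreover have "e * D 3 3 = 0" using cmp[of 3] h1 n by simp
    ultimately show ?thesis by (simp add: algebra_simps)
  qed
  have Cp: "D k p = 0" if "k \<le> n + 1" "4 \<le> p" "p \<le> n + 1" for k p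
  proof -
    have q1: "(of_nat p - 2) * D k p = (if k = 2 then D 2 p else 0) + (if 4 \<le> k then of_nat (k - 2) * D k p else 0)"
      using E4[of p 1 k] n that by simp
    have q2': "- (if k = 2 then D 2 p else 0) = (if 4 \<le> k then of_nat (k - 2) * D k p else 0)"
      using E4[of 1 p k] n that by simp
    have q2: "(if k = 2 then D 2 p else 0) + (if 4 \<le> k then of_nat (k - 2) * D k p else 0) = 0"
      by (simp only: q2'[symmetric]) simp
    have "(of_nat p - 2) * D k p = 0" using q1 q2 by simp
    moreover have "(of_nat p - 2 :: complex) \<noteq> 0"
    proof -
      have "(of_nat p :: complex) \<noteq> of_nat 2" by (simp only: of_nat_eq_iff) (use that in simp)
      then show ?thesis by simp
    qed
    ultimately show ?thesis by simp
  qed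
  have Dz: "D k q = 0" if "k \<le> n + 1" "q \<le> n + 1" for k q
  proof -
    consider "q = 0" | "q = 1" | "q = 2" | "q = 3" | "q \<ge> 4" by linarith
    then show ?thesis
    proof cases
      case 1
      then consider "k = 0" | "k = 1" | "k = 2" | "k = 3" | "k \<ge> 4" by linarith
      then show ?thesis using 1 F7 F4 F1 h4 F2 that by cases auto
    next
      case 2
      then consider "k = 0" | "k = 1" | "k = 2" | "k = 3" | "k \<ge> 4" by linarith
      then show ?thesis using 2 F10 F8a h3 F3 h5 that by cases auto
    next
      case 3
      then consider "k = 0" | "k = 1" | "k = 2" | "k = 3" | "k = 4" | "k \<ge> 5" by linarith
      then show ?thesis using 3 F8b F8c h2 F5 F8d F8e that by cases auto
    next
      case 4 then show ?thesis using C3a C3b that by (cases "k = 3") auto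
    next
      case 5 then show ?thesis using Cp that by simp
    qed
  qed
  have D0: "D = 0"
  proof (intro ext)
    fix k j show "D k j = 0 k j"
      using Dz[of k j] Bider_eqs(2)[OF X] by (cases "k \<le> n + 1 \<and> j \<le> n + 1") (auto simp: mats_def)
  qed
  have rows: "d 0 b = 0 \<and> d 1 b = 0 \<and> d 2 b = 0 \<and> e * d 3 b = 0" if "b \<le> n + 1" for b
    using cmp[OF that] Dz[of 0 b] Dz[of 1 b] Dz[of 2 b] Dz[of 3 b] that n by simp
  have G1: "d 3 0 = 0"
  proof -
    have "(1 - e) * d 3 0 = 0" using E3[of 0 0 3] n by (simp add: algebra_simps)
    moreover have "e * d 3 0 = 0" using rows[of 0] by simp
    ultimately show ?thesis by (simp add: algebra_simps)
  qed
  have G2: "d k 0 = 0" if "4 \<le> k" "k \<le> n + 1" for k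
  proof -
    have "of_nat (k - 2) * d k 0 = 0" using E3[of 0 1 k] n that by simp
    moreover have "(of_nat (k - 2) :: complex) \<noteq> 0" by (simp only: of_nat_eq_0_iff) (use that in simp)
    ultimately show ?thesis by simp
  qed
  have G3: "d 3 1 = 0" using E3[of 1 0 3] n by simp
  have G4: "d k 1 = 0" if "4 \<le> k" "k \<le> n + 1" for k
  proof -
    have "of_nat (k - 2) * d k 1 = 0" using E3[of 1 1 k] n that by simp
    moreover have "(of_nat (k - 2) :: complex) \<noteq> 0" by (simp only: of_nat_eq_0_iff) (use that in simp)
    ultimately show ?thesis by simp
  qed
  have G5: "d 3 2 = 0" using E3[of 2 0 3] n by simp
  have G6: "d 4 2 = 0" using E3[of 1 2 4] n rows[of 1] by simp
  have G7: "d k 2 = 0" if "5 \<le> k" "k \<le> n + 1" for k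
    using E3[of 1 2 k] n that G4[of "k - 1"] by simp
  have G8: "d k 3 = 0" if "4 \<le> k" "k \<le> n + 1" for k using E3[of 3 0 k] n that by simp
  have G9: "d k p = 0" if "3 \<le> k" "k \<le> n + 1" "4 \<le> p" "p \<le> n + 1" "k \<noteq> p" for k p
  proof -
    have r: "d 2 1 = 0" "d 1 1 = 0" using rows[of 1] n by auto
    have "of_nat (p - 2) * d k p = (if 4 \<le> k then of_nat (k - 2) * d k p else 0)"
      using E3[of p 1 k] n that r by auto
    then have "(of_nat (p - 2) - (if 4 \<le> k then of_nat (k - 2) else 0)) * d k p = 0"
      by (simp add: algebra_simps split: if_splits)
    moreover have "(of_nat (p - 2) - (if 4 \<le> k then of_nat (k - 2) else 0) :: complex) \<noteq> 0"
    proof (cases "4 \<le> k")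
      case True
      have "(of_nat (p - 2) - of_nat (k - 2) :: complex) \<noteq> 0"
        by (simp only: right_minus_eq of_nat_eq_iff) (use that True in arith)
      then show ?thesis unfolding if_P[OF True] .
    next
      case False
      show ?thesis by (simp only: if_not_P[OF False] diff_0_right of_nat_eq_0_iff) (use that in arith)
    qed
    ultimately show ?thesis by simp
  qed
  have G10: "4 \<le> q \<longrightarrow> q \<le> n + 1 \<longrightarrow> d q q = 0" for q
  proof (induction q)
    case 0 then show ?case by simp
  next
    case (Suc q)
    have d22: "d 2 2 = 0" using rows[of 2] n by simp
    show ?case
    proof (cases "q \<le> 3")
      case True
      show ?thesis
      proof (intro impI)
        assume "4 \<le> Suc q" "Suc q \<le> n + 1"
        then have "q = 3" using True by simp
        then show "d (Suc q) (Suc q) = 0" using E3[of 2 2 4] n d22 by simp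
      qed
    next
      case False
      show ?thesis
      proof (intro impI)
        assume q: "Suc q \<le> n + 1"
        have "d (q+1) (q+1) = d q q" using E3[of q 2 "q+1"] n False q d22 by simp
        then show "d (Suc q) (Suc q) = 0" using Suc.IH False q by simp
      qed
    qed
  qed
  have dz: "d k j = 0" if "k \<le> n + 1" "j \<le> n + 1" for k j
  proof -
    consider "k \<le> 2" | "k = 3 \<and> j \<le> 3" | "k \<ge> 4 \<and> j \<le> 3" | "k \<ge> 3 \<and> j \<ge> 4 \<and> k \<noteq> j" | "k \<ge> 4 \<and> k = j" by linarith
    then show ?thesis
    proof cases
      case 1
      then consider "k = 0" | "k = 1" | "k = 2" by linarith
      then show ?thesis using rows[OF that(2)] by cases auto
    next
      case 2
      then consider "j = 0" | "j = 1" | "j = 2" | "j = 3" by linarith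
      then show ?thesis using 2 G1 G3 G5 h1 by cases auto
    next
      case 3
      then consider "j = 0" | "j = 1" | "j = 2 \<and> k = 4" | "j = 2 \<and> k \<ge> 5" | "j = 3" by linarith
      then show ?thesis using 3 that G2 G4 G6 G7 G8 by cases auto
    qed (use that G9 G10 in auto)
  qed
  have d0: "d = 0"
  proof (intro ext)
    fix k j show "d k j = 0 k j"
      using dz[of k j] Bider_eqs(1)[OF X] by (cases "k \<le> n + 1 \<and> j \<le> n + 1") (auto simp: mats_def)
  qed
  show ?thesis using d0 D0 by simp
qed


definition psiL :: "nat \<Rightarrow> (nat \<Rightarrow> nat \<Rightarrow> complex) \<times> (nat \<Rightarrow> nat \<Rightarrow> complex) \<Rightarrow> nat \<Rightarrow> complex" where
  "psiL n X = (\<lambda>k. if k = 0 then - fst X 3 3 else if k = 1 then - snd X 2 2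
     else if k = 2 then snd X 2 1 else if k = 3 then snd X 3 0
     else if k \<le> n + 1 then snd X k 1 / of_nat (k - 2) else 0)"

theorem L_iso: assumes n: "4 \<le> n" and e: "e * e = e" shows "bider_iso_to_A (n + 2) (Lg e n)"
proof (rule generic_iso[where psi = "psiL n"])
  show "leib (n + 2) (Lg e n)" by (rule L_leib[OF n e])
next
  fix x assume x: "x \<in> vecs (n+2)"
  have dL: "dL (n+2) (Lg e n) x k a = (\<Sum>i<n+2. x i * Lg e n i a k)" if "k < n + 2" "a < n + 2" for k a
    by (rule dL_apply) (use that in auto)
  have dR: "dR (n+2) (Lg e n) x k a = - (\<Sum>j<n+2. x j * Lg e n a j k)" if "k < n + 2" "a < n + 2" for k a
    by (rule dR_apply) (use that in auto)
  note dL' = dL[unfolded L_RT[OF n]] and dR' = dR[unfolded L_LT[OF n]]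
  show "psiL n (phi (n + 2) (Lg e n) x) = x"
  proof (rule ext)
    fix k
    have a: "dR (n+2) (Lg e n) x 3 3 = - x 0" using dR'[of 3 3] n by simp
    have b: "dL (n+2) (Lg e n) x 2 2 = - x 1" using dL'[of 2 2] n by simp
    have c: "dL (n+2) (Lg e n) x 2 1 = x 2" using dL'[of 2 1] n by simp
    have d: "dL (n+2) (Lg e n) x 3 0 = x 3" using dL'[of 3 0] n by simp
    have f: "dL (n+2) (Lg e n) x k 1 / of_nat (k - 2) = x k" if "4 \<le> k" "k \<le> n + 1"
    proof -
      have eq: "dL (n+2) (Lg e n) x k 1 = of_nat (k - 2) * x k" using dL'[of k 1] n that by simp
      have nz: "(of_nat (k - 2) :: complex) \<noteq> 0" by (simp only: of_nat_eq_0_iff) (use that in simp)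
      show ?thesis unfolding eq by (rule nonzero_mult_div_cancel_left[OF nz])
    qed
    show "psiL n (phi (n + 2) (Lg e n) x) k = x k"
      using x a b c d f by (auto simp: psiL_def phi_def vecs_def)
  qed
next
  fix X assume "X \<in> Bider (n + 2) (Lg e n)"
  show "psiL n X \<in> vecs (n + 2)" using n by (simp add: psiL_def vecs_def)
next
  fix X Y :: "(nat \<Rightarrow> nat \<Rightarrow> complex) \<times> (nat \<Rightarrow> nat \<Rightarrow> complex)" and a :: complex
  show "psiL n (pair_lin a X Y) = sv a (psiL n X) + psiL n Y"
    by (rule ext) (simp add: psiL_def pair_lin_def sv_def algebra_simps add_divide_distrib)
next
  fix X assume X: "X \<in> Bider (n + 2) (Lg e n)" and p: "psiL n X = 0"
  obtain d D where XdD: "X = (d, D)" by (cases X)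
  have h1: "d 3 3 = 0" using fun_cong[OF p, of 0] XdD by (simp add: psiL_def)
  have h2: "D 2 2 = 0" using fun_cong[OF p, of 1] XdD by (simp add: psiL_def)
  have h3: "D 2 1 = 0" using fun_cong[OF p, of 2] XdD n by (simp add: psiL_def)
  have h4: "D 3 0 = 0" using fun_cong[OF p, of 3] XdD n by (simp add: psiL_def)
  have h5: "D k 1 = 0" if "4 \<le> k" "k \<le> n + 1" for k
  proof -
    have "D k 1 / of_nat (k - 2) = 0" using fun_cong[OF p, of k] XdD that by (simp add: psiL_def)
    moreover have "(of_nat (k - 2) :: complex) \<noteq> 0" by (simp only: of_nat_eq_0_iff) (use that in simp)
    ultimately show ?thesis by simp
  qed
  show "X = (0, 0)" using L_ker[OF X[unfolded XdD] n h1 h2 h3 h4 h5] XdD by simp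
qed

theorem mainTheorem15:
  fixes n :: nat
  shows "(2 \<le> n \<longrightarrow> bider_iso_to_A (n + 1) (R_bb n))
       \<and> (4 \<le> n \<longrightarrow> bider_iso_to_A (n + 2) (RF_bb n)
                  \<and> bider_iso_to_A (n + 2) (L1_bb n)
                  \<and> bider_iso_to_A (n + 2) (L2_bb n))"
  using R_iso RF_iso L_iso[of n 1] L_iso[of n 0] L1_eq L2_eq by auto

end
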